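(* Let $n\ge2$ and let $a_1<a_2$ be positive integers. Let $\phi:\mathbb{R}^n_{\ge0}\to\mathbb{R}^2_{\ge0}$, $\phi(x)=(\sum_{i=1}^n x_i^{a_1},\sum_{i=1}^n x_i^{a_2})$. Then $$\mathrm{im}(\phi)=\bigl\{c\in\mathbb{R}^2_{\ge0}:\ c_2^{a_1}\le c_1^{a_2}\le n^{a_2-a_1}c_2^{a_1}\bigr\}.$$ *)

theory Defs
  imports "HOL-Analysis.Analysis"
begin

text \<open>Points of R^n_{>=0} are represented as functions x :: nat => real with
  x i >= 0 for i < n (coordinates x 0, ..., x (n-1)); values at i >= n are irrelevant.\<close>

definition nonneg_orthant :: "nat \<Rightarrow> (nat \<Rightarrow> real) set" where
  "nonneg_orthant n = {x. \<forall>i<n. 0 \<le> x i}"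

definition power_sum_map :: "nat \<Rightarrow> nat \<Rightarrow> nat \<Rightarrow> (nat \<Rightarrow> real) \<Rightarrow> real \<times> real" where
  "power_sum_map n a1 a2 x = ((\<Sum>i<n. x i ^ a1), (\<Sum>i<n. x i ^ a2))"

end

theory Submission
  imports Defs
begin

lemma lemA:
  fixes x :: "nat \<Rightarrow> real" and I :: "nat set" and p q :: nat
  assumes fin: "finite I" and nn: "\<And>i. i \<in> I \<Longrightarrow> 0 \<le> x i" and p: "0 < p" and pq: "p < q"
  shows "(\<Sum>i\<in>I. x i ^ q) ^ p \<le> (\<Sum>i\<in>I. x i ^ p) ^ q"
proof (cases "I = {}")
  case True then show ?thesis using p pq by (simp add: power_0_left)
next
  case False
  define M where "M = Max (x ` I)"
  have MI: "M \<in> x ` I" unfolding M_def using fin False by simp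
  have xM: "x i \<le> M" if "i \<in> I" for i unfolding M_def using fin that by simp
  have M0: "0 \<le> M" using MI nn by auto
  have c1: "M ^ p \<le> (\<Sum>i\<in>I. x i ^ p)"
    using MI fin nn by (auto intro!: member_le_sum)
  have "(\<Sum>i\<in>I. x i ^ q) \<le> (\<Sum>i\<in>I. x i ^ p * M ^ (q - p))"
  proof (rule sum_mono)
    fix i assume i: "i \<in> I"
    have "x i ^ q = x i ^ p * x i ^ (q - p)" using pq by (simp flip: power_add)
    also have "\<dots> \<le> x i ^ p * M ^ (q - p)"
      using nn[OF i] xM[OF i] by (intro mult_left_mono power_mono) auto
    finally show "x i ^ q \<le> x i ^ p * M ^ (q - p)" .
  qed
  also have "\<dots> = (\<Sum>i\<in>I. x i ^ p) * M ^ (q - p)" by (simp add: sum_distrib_right)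
  finally have le: "(\<Sum>i\<in>I. x i ^ q) \<le> (\<Sum>i\<in>I. x i ^ p) * M ^ (q - p)" .
  have S0: "0 \<le> (\<Sum>i\<in>I. x i ^ q)" using nn by (auto intro!: sum_nonneg)
  have "(\<Sum>i\<in>I. x i ^ q) ^ p \<le> ((\<Sum>i\<in>I. x i ^ p) * M ^ (q - p)) ^ p"
    using le S0 by (intro power_mono) auto
  also have "\<dots> = (\<Sum>i\<in>I. x i ^ p) ^ p * (M ^ p) ^ (q - p)"
    by (simp add: power_mult_distrib flip: power_mult) (simp add: mult.commute)
  also have "\<dots> \<le> (\<Sum>i\<in>I. x i ^ p) ^ p * (\<Sum>i\<in>I. x i ^ p) ^ (q - p)"
    using c1 M0 nn by (intro mult_left_mono power_mono) (auto intro!: sum_nonneg zero_le_power)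
  also have "\<dots> = (\<Sum>i\<in>I. x i ^ p) ^ q" using pq by (simp flip: power_add)
  finally show ?thesis .
qed

lemma lemB:
  fixes x :: "nat \<Rightarrow> real" and I :: "nat set" and p q :: nat
  assumes fin: "finite I" and nn: "\<And>i. i \<in> I \<Longrightarrow> 0 \<le> x i" and p: "0 < p" and pq: "p < q"
  shows "(\<Sum>i\<in>I. x i ^ p) ^ q \<le> real (card I) ^ (q - p) * (\<Sum>i\<in>I. x i ^ q) ^ p"
proof -
  define S where "S = {i\<in>I. 0 < x i}"
  have finS: "finite S" using fin S_def by simp
  have SI: "S \<subseteq> I" using S_def by auto
  have eqp: "(\<Sum>i\<in>I. x i ^ m) = (\<Sum>i\<in>S. x i ^ m)" if "m > 0" for m
  proof (rule sum.mono_neutral_right[OF fin SI])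
    show "\<forall>i\<in>I - S. x i ^ m = 0" using nn that unfolding S_def by force
  qed
  show ?thesis
  proof (cases "S = {}")
    case True
    then show ?thesis using eqp[of p] p pq nn by (simp add: power_0_left sum_nonneg)
  next
    case False
    define k where "k = real (card S)"
    have k0: "k > 0" using False finS k_def by (simp add: card_gt_0_iff)
    define r where "r = real q / real p"
    have r1: "r \<ge> 1" using p pq unfolding r_def by simp
    have "(\<lambda>y. y powr r) (\<Sum>i\<in>S. (1/k) *\<^sub>R (x i ^ p)) \<le> (\<Sum>i\<in>S. (1/k) * (\<lambda>y. y powr r) (x i ^ p))"
    proof (rule convex_on_sum[OF finS False powr_convex[OF r1]])
      show "(\<Sum>i\<in>S. 1 / k) = 1" using k0 k_def by simp
    qed (use k0 S_def in auto)
    moreover have "(x i ^ p) powr r = x i ^ q" if "i \<in> S" for i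
    proof -
      have xi: "x i > 0" using that S_def by auto
      have "(x i ^ p) powr r = (x i powr real p) powr r" using xi by (simp add: powr_realpow)
      also have "\<dots> = x i powr real q" using p by (simp add: powr_powr r_def)
      also have "\<dots> = x i ^ q" using xi by (simp add: powr_realpow)
      finally show ?thesis .
    qed
    ultimately have J: "(\<Sum>i\<in>S. x i ^ p / k) powr r \<le> (\<Sum>i\<in>S. x i ^ q / k)"
      by simp
    define A where "A = (\<Sum>i\<in>S. x i ^ p) / k"
    define B where "B = (\<Sum>i\<in>S. x i ^ q) / k"
    have A0: "A \<ge> 0" unfolding A_def using k0 S_def by (auto intro!: sum_nonneg divide_nonneg_pos)
    have J2: "A powr r \<le> B" using J unfolding A_def B_def by (simp add: sum_divide_distrib)
    have "A ^ q = (A powr r) ^ p"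
    proof (cases "A = 0")
      case True then show ?thesis using p pq by (simp add: power_0_left)
    next
      case False
      then have Ap: "A > 0" using A0 by simp
      have "(A powr r) ^ p = (A powr r) powr real p" using Ap by (simp add: powr_realpow)
      also have "\<dots> = A powr real q" using p by (simp add: powr_powr r_def)
      also have "\<dots> = A ^ q" using Ap by (simp add: powr_realpow)
      finally show ?thesis by simp
    qed
    also have "\<dots> \<le> B ^ p" using J2 by (intro power_mono) auto
    finally have AB: "A ^ q \<le> B ^ p" .
    have "(\<Sum>i\<in>S. x i ^ p) ^ q = k ^ q * A ^ q" using k0 unfolding A_def by (simp add: power_divide)
    also have "\<dots> \<le> k ^ q * B ^ p" using AB k0 by (intro mult_left_mono) auto
    also have "\<dots> = k ^ (q - p) * (\<Sum>i\<in>S. x i ^ q) ^ p"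
      using k0 pq unfolding B_def by (simp add: power_divide power_diff)
    also have "\<dots> \<le> real (card I) ^ (q - p) * (\<Sum>i\<in>S. x i ^ q) ^ p"
      unfolding k_def using card_mono[OF fin SI] S_def
      by (intro mult_right_mono power_mono) (auto intro!: zero_le_power sum_nonneg)
    finally show ?thesis using eqp[of p] eqp[of q] p pq by simp
  qed
qed


lemma surj_part:
  fixes n p q :: nat and c1 c2 :: real
  assumes n2: "n \<ge> 2" and p: "0 < p" and pq: "p < q"
    and c1: "0 \<le> c1" and c2: "0 \<le> c2" and lo: "c2 ^ p \<le> c1 ^ q"
    and hi: "c1 ^ q \<le> real n ^ (q - p) * c2 ^ p"
  shows "(c1, c2) \<in> power_sum_map n p q ` nonneg_orthant n"
proof (cases "c1 = 0")
  case True
  have q0: "q \<noteq> 0" using pq by simp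
  have "c2 ^ p \<le> 0" using lo q0 True by (simp add: power_0_left)
  then have "c2 = 0"
  proof (rule contrapos_pp)
    assume "c2 \<noteq> 0"
    then have "c2 > 0" using c2 by simp
    then have "c2 ^ p > 0" by simp
    then show "\<not> c2 ^ p \<le> 0" by simp
  qed
  have z: "power_sum_map n p q (\<lambda>_. 0) = (0, 0)" using p q0 by (simp add: power_sum_map_def)
  have "(\<lambda>_. 0) \<in> nonneg_orthant n" by (simp add: nonneg_orthant_def)
  then show ?thesis by (rule image_eqI[rotated]) (simp add: z True \<open>c2 = 0\<close>)
next
  case False
  then have c1p: "c1 > 0" using c1 by simp
  obtain m where nm: "n = Suc m" using n2 by (cases n) auto
  have rn: "real n = 1 + real m" using nm by simp
  define h where "h t = c1 ^ q * (1 + real m * t ^ q) ^ p - c2 ^ p * (1 + real m * t ^ p) ^ q" for t :: real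
  have q0: "q \<noteq> 0" using pq by simp
  have h0: "h 0 = c1 ^ q - c2 ^ p" using p q0 by (simp add: h_def power_0_left)
  then have h0': "0 \<le> h 0" using lo by simp
  have "c1 ^ q * real n ^ p \<le> real n ^ (q - p) * c2 ^ p * real n ^ p"
    using hi by (rule mult_right_mono) simp
  also have "\<dots> = c2 ^ p * (real n ^ (q - p) * real n ^ p)" by (simp only: mult_ac)
  also have "real n ^ (q - p) * real n ^ p = real n ^ q" using pq by (simp flip: power_add)
  finally have "c1 ^ q * real n ^ p \<le> c2 ^ p * real n ^ q" .
  moreover have "h 1 = c1 ^ q * real n ^ p - c2 ^ p * real n ^ q" unfolding h_def rn by simp
  ultimately have h1: "h 1 \<le> 0" by simp
  have cont: "\<forall>x. 0 \<le> x \<and> x \<le> 1 \<longrightarrow> isCont h x"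
    unfolding h_def by (intro allI impI continuous_intros)
  have "\<exists>x. 0 \<le> x \<and> x \<le> 1 \<and> h x = 0"
    by (rule IVT2[of h 1 0 0, OF h1 h0' _ cont]) simp
  then obtain t where t0: "0 \<le> t" and t1: "t \<le> 1" and ht: "h t = 0" by blast
  define A where "A = 1 + real m * t ^ p"
  define B where "B = 1 + real m * t ^ q"
  have A0: "A > 0" unfolding A_def using t0 by (simp add: add_pos_nonneg)
  have B0: "B > 0" unfolding B_def using t0 by (simp add: add_pos_nonneg)
  have hAB: "c1 ^ q * B ^ p = c2 ^ p * A ^ q" using ht unfolding h_def A_def B_def by simp
  define l where "l = root p (c1 / A)"
  have l0: "l \<ge> 0" unfolding l_def using c1 A0 by (simp add: real_root_ge_zero)
  have lp: "l ^ p = c1 / A" unfolding l_def using p c1 A0 by simp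
  have lqp: "(l ^ q) ^ p = (l ^ p) ^ q" by (metis power_mult mult.commute)
  have "(l ^ q * B) ^ p = (l ^ p) ^ q * B ^ p" by (simp only: power_mult_distrib lqp)
  also have "\<dots> = c1 ^ q * B ^ p / A ^ q" by (simp add: lp power_divide)
  also have "\<dots> = c2 ^ p"
  proof -
    have "A ^ q \<noteq> 0" using A0 by simp
    then show ?thesis by (simp add: hAB)
  qed
  finally have lqBp: "(l ^ q * B) ^ p = c2 ^ p" .
  have lqB0: "0 \<le> l ^ q * B" using l0 B0 by simp
  have lqB: "l ^ q * B = c2" using power_eq_imp_eq_base[OF lqBp lqB0 c2 p] .
  define x where "x i = (if i = 0 then l else l * t)" for i :: nat
  have sx: "(\<Sum>i<n. x i ^ k) = l ^ k * (1 + real m * t ^ k)" for k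
  proof -
    have "(\<Sum>i<n. x i ^ k) = x 0 ^ k + (\<Sum>i<m. x (Suc i) ^ k)" unfolding nm by (rule sum.lessThan_Suc_shift)
    also have "\<dots> = l ^ k + real m * (l * t) ^ k" by (simp add: x_def)
    also have "\<dots> = l ^ k * (1 + real m * t ^ k)" by (simp add: power_mult_distrib distrib_left)
    finally show ?thesis .
  qed
  have e: "power_sum_map n p q x = (c1, c2)"
    unfolding power_sum_map_def sx using lp A0 lqB by (simp add: A_def B_def)
  have mem: "x \<in> nonneg_orthant n" unfolding nonneg_orthant_def x_def using l0 t0 by auto
  show ?thesis using image_eqI[of "(c1, c2)" "power_sum_map n p q" x, OF e[symmetric] mem] .
qed

theorem proposition5p2:
  fixes n a1 a2 :: nat
  assumes "n \<ge> 2" and "0 < a1" and "a1 < a2"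
  shows "power_sum_map n a1 a2 ` nonneg_orthant n =
         {(c1, c2). 0 \<le> c1 \<and> 0 \<le> c2 \<and> c2 ^ a1 \<le> c1 ^ a2 \<and>
                    c1 ^ a2 \<le> real n ^ (a2 - a1) * c2 ^ a1}"
proof
  show "power_sum_map n a1 a2 ` nonneg_orthant n \<subseteq> {(c1, c2). 0 \<le> c1 \<and> 0 \<le> c2 \<and> c2 ^ a1 \<le> c1 ^ a2 \<and>
                    c1 ^ a2 \<le> real n ^ (a2 - a1) * c2 ^ a1}"
  proof
    fix c assume "c \<in> power_sum_map n a1 a2 ` nonneg_orthant n"
    then obtain x where x: "x \<in> nonneg_orthant n" and c: "c = power_sum_map n a1 a2 x" by auto
    have nn: "\<And>i. i \<in> {..<n} \<Longrightarrow> 0 \<le> x i" using x by (auto simp: nonneg_orthant_def)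
    have A: "(\<Sum>i<n. x i ^ a2) ^ a1 \<le> (\<Sum>i<n. x i ^ a1) ^ a2"
      using lemA[of "{..<n}" x a1 a2, OF _ nn] assms by simp
    have B: "(\<Sum>i<n. x i ^ a1) ^ a2 \<le> real n ^ (a2 - a1) * (\<Sum>i<n. x i ^ a2) ^ a1"
      using lemB[of "{..<n}" x a1 a2, OF _ nn] assms by simp
    have P1: "0 \<le> (\<Sum>i<n. x i ^ a1)" using nn by (auto intro!: sum_nonneg)
    have P2: "0 \<le> (\<Sum>i<n. x i ^ a2)" using nn by (auto intro!: sum_nonneg)
    show "c \<in> {(c1, c2). 0 \<le> c1 \<and> 0 \<le> c2 \<and> c2 ^ a1 \<le> c1 ^ a2 \<and>
                    c1 ^ a2 \<le> real n ^ (a2 - a1) * c2 ^ a1}"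
      unfolding c power_sum_map_def using A B P1 P2 by simp
  qed
next
  show "{(c1, c2). 0 \<le> c1 \<and> 0 \<le> c2 \<and> c2 ^ a1 \<le> c1 ^ a2 \<and>
                    c1 ^ a2 \<le> real n ^ (a2 - a1) * c2 ^ a1} \<subseteq> power_sum_map n a1 a2 ` nonneg_orthant n"
  proof (rule subsetI, clarify)
    fix c1 c2 :: real
    assume "0 \<le> c1" "0 \<le> c2" "c2 ^ a1 \<le> c1 ^ a2" "c1 ^ a2 \<le> real n ^ (a2 - a1) * c2 ^ a1"
    then show "(c1, c2) \<in> power_sum_map n a1 a2 ` nonneg_orthant n" by (rule surj_part[OF assms])
  qed
qed

end
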